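(* The set of variables satisfying the KKT condition of the covariance selection problem is the set of all tuples $(\lambda ,S_k^\lambda ,F_k^\lambda ,P_k^\lambda )_{k = 0}^{N - 1}$ such that $\lambda>0$ and $C(\{ S_k^\lambda \} _{k = 0}^{N - 1} ) = \gamma$.
   Context: Consider the stochastic LTI system $x(k+1)=Ax(k)+Bu(k)+w(k)$ with $x(k)\in\mathbb R^n$, $u(k)\in\mathbb R^m$, $x(0)\sim\mathcal N(z,V)$, $w(k)\sim\mathcal N(0,W)$ mutually independent, and linear feedback $u(k)=F_kx(k)$, $k\in\{0,\dots,N-1\}$. With $S_k=\mathbb E([x(k);u(k)][x(k);u(k)]^T)$, the covariance selection problem is: minimize $J_p(\{S_k\})=\mathrm{Tr}\big(Q_f([A\ B]S_{N-1}[A\ B]^T+W)\big)+\sum_{k=0}^{N-1}\mathrm{Tr}(\mathrm{diag}(Q_k,R_k)S_k)$ over $\{S_k,F_k\}$ subject to $S_k=\Phi(F_k,S_{k-1})$ ($k=1,\dots,N-1$), $S_0=[I_n;F_0](V+zz^T)[I_n;F_0]^T$, and $C(\{S_k\})\le\gamma$, where $C(\{S_k\})=\mathrm{Tr}\big(\tilde Q_f([A\ B]S_{N-1}[A\ B]^T+W)\big)+\sum_{k=0}^{N-1}\mathrm{Tr}(\mathrm{diag}(\tilde Q_k,\tilde R_k)S_k)$ and $\Phi(F,S)=[I_n;F]([A\ B]S[A\ B]^T+W)[I_n;F]^T$. The KKT condition refers to the Lagrangian $L=J_p+\sum_{k=1}^{N-1}\mathrm{Tr}((\Phi(F_k,S_{k-1})-S_k)P_k)+\mathrm{Tr}(([I;F_0](V+zz^T)[I;F_0]^T-S_0)P_0)+\lambda(C(\{S_k\})-\gamma)$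 with multipliers $P_k\in\mathbb S^{n+m}$, $\lambda\ge0$: primal feasibility, complementary slackness $\lambda(C(\{S_k\})-\gamma)=0$, dual feasibility $\lambda\ge0$, and stationarity of $L$ in $(S_k,F_k)$. Assumptions: $Q_f,\tilde Q_f,Q_k,\tilde Q_k\succeq0$, $R_k+\lambda\tilde R_k\succ0$ for all $k$, $\lambda>0$; $V\succ0$, $W\succ0$; strict feasibility of the constraint. For $\lambda\ge0$, $X_N^\lambda=Q_f+\lambda\tilde Q_f$, $X_k^\lambda=A^TX_{k+1}^\lambda A-A^TX_{k+1}^\lambda B(R_k+\lambda\tilde R_k+B^TX_{k+1}^\lambda B)^{-1}B^TX_{k+1}^\lambda A+Q_k+\lambda\tilde Q_k$, $F_k^\lambda=-(R_k+\lambda\tilde R_k+B^TX_{k+1}^\lambda B)^{-1}B^TX_{k+1}^\lambda A$, $S_0^\lambda=[I;F_0^\lambda](V+zz^T)[I;F_0^\lambda]^T$, $S_k^\lambda=\Phi(F_k^\lambda,S_{k-1}^\lambda)$, and $P_k^\lambda=\begin{bmatrix}Q_k+\lambda\tilde Q_k+A^TX_{k+1}^\lambda A & A^TX_{k+1}^\lambda B\\ B^TX_{k+1}^\lambda A & R_k+\lambda\tilde R_k+B^TX_{k+1}^\lambda B\end{bmatrix}$. It was shown that for each fixed $\lambda$, $(S_k^\lambda,F_k^\lambda,P_k^\lambda)$ uniquely satisfy primal feasibility equalities and stationarity. Nontrivial-scenario assumption: $C(\{S_k^0\})>\gamma$. *)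

theory Defs
  imports "HOL-Analysis.Analysis"
begin

text \<open>Matrices over real with finite index types: state dimension 'n, input dimension 'm,
  stacked dimension 'n + 'm (sum type, state indices Inl, input indices Inr).
  Time-indexed objects are sequences over nat; only indices k < N matter.\<close>

type_synonym 'a sqm = "real^'a^'a"

definition psd :: "real^'a^'a \<Rightarrow> bool" where
  "psd M \<longleftrightarrow> transpose M = M \<and> (\<forall>x. 0 \<le> x \<bullet> (M *v x))"

definition pd :: "real^'a^'a \<Rightarrow> bool" where
  "pd M \<longleftrightarrow> transpose M = M \<and> (\<forall>x. x \<noteq> 0 \<longrightarrow> 0 < x \<bullet> (M *v x))"

definition symm :: "real^'a^'a \<Rightarrow> bool" where
  "symm M \<longleftrightarrow> transpose M = M"

definition stackI :: "real^'n^'m \<Rightarrow> real^'n^('n + 'm)" where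
  "stackI F = (\<chi> i j. case i of Inl a \<Rightarrow> (mat 1 :: real^'n^'n) $ a $ j | Inr b \<Rightarrow> F $ b $ j)"

definition hcat :: "real^'n^'n \<Rightarrow> real^'m^'n \<Rightarrow> real^('n + 'm)^'n" where
  "hcat A B = (\<chi> i j. case j of Inl a \<Rightarrow> A $ i $ a | Inr b \<Rightarrow> B $ i $ b)"

definition blk :: "real^'n^'n \<Rightarrow> real^'m^'n \<Rightarrow> real^'n^'m \<Rightarrow> real^'m^'m \<Rightarrow> real^('n + 'm)^('n + 'm)" where
  "blk M11 M12 M21 M22 = (\<chi> i j. case i of
      Inl a \<Rightarrow> (case j of Inl b \<Rightarrow> M11 $ a $ b | Inr b \<Rightarrow> M12 $ a $ b)
    | Inr a \<Rightarrow> (case j of Inl b \<Rightarrow> M21 $ a $ b | Inr b \<Rightarrow> M22 $ a $ b))"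

definition bdiag :: "real^'n^'n \<Rightarrow> real^'m^'m \<Rightarrow> real^('n + 'm)^('n + 'm)" where
  "bdiag Q R = blk Q 0 0 R"

definition outer :: "real^'n \<Rightarrow> real^'n^'n" where
  "outer z = (\<chi> i j. z $ i * z $ j)"

record ('n, 'm) lqprob =
  sA :: "real^'n^'n"
  sB :: "real^'m^'n"
  sW :: "real^'n^'n"
  sV :: "real^'n^'n"
  sz :: "real^'n"
  hor :: nat
  cQf :: "real^'n^'n"
  cQ :: "nat \<Rightarrow> real^'n^'n"
  cR :: "nat \<Rightarrow> real^'m^'m"
  tQf :: "real^'n^'n"
  tQ :: "nat \<Rightarrow> real^'n^'n"
  tR :: "nat \<Rightarrow> real^'m^'m"

definition Phi :: "('n::finite, 'm::finite) lqprob \<Rightarrow> real^'n^'m \<Rightarrow> real^('n+'m)^('n+'m) \<Rightarrow> real^('n+'m)^('n+'m)" where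
  "Phi p F S = stackI F ** (hcat (sA p) (sB p) ** S ** transpose (hcat (sA p) (sB p)) + sW p) ** transpose (stackI F)"

definition S0of :: "('n::finite, 'm::finite) lqprob \<Rightarrow> real^'n^'m \<Rightarrow> real^('n+'m)^('n+'m)" where
  "S0of p F = stackI F ** (sV p + outer (sz p)) ** transpose (stackI F)"

definition qcost :: "('n::finite, 'm::finite) lqprob \<Rightarrow> real^'n^'n \<Rightarrow> (nat \<Rightarrow> real^'n^'n) \<Rightarrow> (nat \<Rightarrow> real^'m^'m)
     \<Rightarrow> (nat \<Rightarrow> real^('n+'m)^('n+'m)) \<Rightarrow> real" where
  "qcost p Qf Q R S =
     trace (Qf ** (hcat (sA p) (sB p) ** S (hor p - 1) ** transpose (hcat (sA p) (sB p)) + sW p))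
     + (\<Sum>k<hor p. trace (bdiag (Q k) (R k) ** S k))"

definition Jp :: "('n::finite, 'm::finite) lqprob \<Rightarrow> (nat \<Rightarrow> real^('n+'m)^('n+'m)) \<Rightarrow> real" where
  "Jp p S = qcost p (cQf p) (cQ p) (cR p) S"

definition Cc :: "('n::finite, 'm::finite) lqprob \<Rightarrow> (nat \<Rightarrow> real^('n+'m)^('n+'m)) \<Rightarrow> real" where
  "Cc p S = qcost p (tQf p) (tQ p) (tR p) S"

definition dyn_ok :: "('n::finite, 'm::finite) lqprob \<Rightarrow> (nat \<Rightarrow> real^('n+'m)^('n+'m)) \<Rightarrow> (nat \<Rightarrow> real^'n^'m) \<Rightarrow> bool" where
  "dyn_ok p S F \<longleftrightarrow> S 0 = S0of p (F 0) \<and> (\<forall>k. 1 \<le> k \<and> k < hor p \<longrightarrow> S k = Phi p (F k) (S (k - 1)))"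

definition Lag :: "('n::finite, 'm::finite) lqprob \<Rightarrow> real \<Rightarrow> (nat \<Rightarrow> real^('n+'m)^('n+'m)) \<Rightarrow> (nat \<Rightarrow> real^'n^'m)
     \<Rightarrow> (nat \<Rightarrow> real^('n+'m)^('n+'m)) \<Rightarrow> real \<Rightarrow> real" where
  "Lag p \<gamma> S F P lam = Jp p S
     + (\<Sum>k\<in>{1..<hor p}. trace ((Phi p (F k) (S (k - 1)) - S k) ** P k))
     + trace ((S0of p (F 0) - S 0) ** P 0)
     + lam * (Cc p S - \<gamma>)"

definition stationary :: "('n::finite, 'm::finite) lqprob \<Rightarrow> real \<Rightarrow> (nat \<Rightarrow> real^('n+'m)^('n+'m)) \<Rightarrow> (nat \<Rightarrow> real^'n^'m)
     \<Rightarrow> (nat \<Rightarrow> real^('n+'m)^('n+'m)) \<Rightarrow> real \<Rightarrow> bool" where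
  "stationary p \<gamma> S F P lam \<longleftrightarrow>
     (\<forall>k<hor p.
        ((\<lambda>X. Lag p \<gamma> (S(k := X)) F P lam) has_derivative (\<lambda>_. 0)) (at (S k) within {X. symm X})
      \<and> ((\<lambda>G. Lag p \<gamma> S (F(k := G)) P lam) has_derivative (\<lambda>_. 0)) (at (F k)))"

definition KKT :: "('n::finite, 'm::finite) lqprob \<Rightarrow> real \<Rightarrow> real \<Rightarrow> (nat \<Rightarrow> real^('n+'m)^('n+'m)) \<Rightarrow> (nat \<Rightarrow> real^'n^'m)
     \<Rightarrow> (nat \<Rightarrow> real^('n+'m)^('n+'m)) \<Rightarrow> bool" where
  "KKT p \<gamma> lam S F P \<longleftrightarrow>
     (\<forall>k<hor p. symm (P k))
   \<and> dyn_ok p S F \<and> Cc p S \<le> \<gamma>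
   \<and> lam * (Cc p S - \<gamma>) = 0
   \<and> 0 \<le> lam
   \<and> stationary p \<gamma> S F P lam"

text \<open>Riccati recursion, indexed backwards: Xb j = X_{N-j}.\<close>
fun Xb :: "('n::finite, 'm::finite) lqprob \<Rightarrow> real \<Rightarrow> nat \<Rightarrow> real^'n^'n" where
  "Xb p lam 0 = cQf p + lam *\<^sub>R tQf p"
| "Xb p lam (Suc j) = (let k = hor p - Suc j; X = Xb p lam j; A = sA p; B = sB p in
     transpose A ** X ** A
     - transpose A ** X ** B ** matrix_inv (cR p k + lam *\<^sub>R tR p k + transpose B ** X ** B) ** transpose B ** X ** A
     + cQ p k + lam *\<^sub>R tQ p k)"

definition Xlam :: "('n::finite, 'm::finite) lqprob \<Rightarrow> real \<Rightarrow> nat \<Rightarrow> real^'n^'n" where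
  "Xlam p lam k = Xb p lam (hor p - k)"

definition Flam :: "('n::finite, 'm::finite) lqprob \<Rightarrow> real \<Rightarrow> nat \<Rightarrow> real^'n^'m" where
  "Flam p lam k = (let X = Xlam p lam (Suc k); A = sA p; B = sB p in
     - (matrix_inv (cR p k + lam *\<^sub>R tR p k + transpose B ** X ** B) ** transpose B ** X ** A))"

fun Slam :: "('n::finite, 'm::finite) lqprob \<Rightarrow> real \<Rightarrow> nat \<Rightarrow> real^('n+'m)^('n+'m)" where
  "Slam p lam 0 = S0of p (Flam p lam 0)"
| "Slam p lam (Suc k) = Phi p (Flam p lam (Suc k)) (Slam p lam k)"

definition Plam :: "('n::finite, 'm::finite) lqprob \<Rightarrow> real \<Rightarrow> nat \<Rightarrow> real^('n+'m)^('n+'m)" where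
  "Plam p lam k = (let X = Xlam p lam (Suc k); A = sA p; B = sB p in
     blk (cQ p k + lam *\<^sub>R tQ p k + transpose A ** X ** A) (transpose A ** X ** B)
         (transpose B ** X ** A) (cR p k + lam *\<^sub>R tR p k + transpose B ** X ** B))"

end

theory Submission
  imports Defs
begin


lemma mm_add_r: "((A::real^'n^'m) + B) ** (C::real^'p^'n) = A ** C + B ** C"
  by (simp add: matrix_matrix_mult_def vec_eq_iff sum.distrib distrib_right)
lemma mm_diff_r: "((A::real^'n^'m) - B) ** (C::real^'p^'n) = A ** C - B ** C"
  by (simp add: matrix_matrix_mult_def vec_eq_iff sum_subtractf left_diff_distrib)
lemma mm_diff_l: "(A::real^'n^'m) ** ((B::real^'p^'n) - C) = A ** B - A ** C"
  by (simp add: matrix_matrix_mult_def vec_eq_iff sum_subtractf right_diff_distrib)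
lemma mm_neg_l: "(- (A::real^'n^'m)) ** (B::real^'p^'n) = - (A ** B)"
  by (simp add: matrix_matrix_mult_def vec_eq_iff sum_negf)
lemma mm_neg_r: "(A::real^'n^'m) ** (- (B::real^'p^'n)) = - (A ** B)"
  by (simp add: matrix_matrix_mult_def vec_eq_iff sum_negf)
lemma tr_add: "transpose ((A::real^'n^'m) + B) = transpose A + transpose B"
  by (simp add: transpose_def vec_eq_iff)
lemma tr_diff: "transpose ((A::real^'n^'m) - B) = transpose A - transpose B"
  by (simp add: transpose_def vec_eq_iff)
lemma tr_neg: "transpose (- (A::real^'n^'m)) = - transpose A"
  by (simp add: transpose_def vec_eq_iff)
lemma tr_zero: "transpose (0::real^'n^'m) = 0"
  by (simp add: transpose_def vec_eq_iff)
lemma trace_transpose: "trace (transpose (A::real^'n^'n)) = trace A"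
  by (simp add: trace_def transpose_def)
lemma trace_scaleR: "trace (c *\<^sub>R (A::real^'n^'n)) = c * trace A"
  by (simp add: trace_def sum_distrib_left)
lemma trace_neg: "trace (- (A::real^'n^'n)) = - trace A"
  by (simp add: trace_def sum_negf)
lemma trace_zero: "trace (0::real^'n^'n) = 0"
  by (simp add: trace_def)

lemma trace_tK: "trace (transpose (K::real^'n^'m) ** K) = (\<Sum>i\<in>UNIV. \<Sum>j\<in>UNIV. (K$j$i)^2)"
  by (simp add: trace_def matrix_matrix_mult_def transpose_def power2_eq_square)

lemma trace_tK_zero: assumes "trace (transpose (K::real^'n^'m) ** K) = 0" shows "K = 0"
proof -
  have "\<forall>i\<in>UNIV. (\<Sum>j\<in>UNIV. (K$j$i)^2) = 0"
    using assms unfolding trace_tK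
    by (subst sum_nonneg_eq_0_iff[symmetric]) (auto intro: sum_nonneg)
  then have "\<forall>i j. (K$j$i)^2 = 0"
    by (simp add: sum_nonneg_eq_0_iff)
  then show ?thesis by (simp add: vec_eq_iff)
qed

lemma trace_orth: assumes "\<And>H::real^'m^'n. trace (H ** (K::real^'n^'m)) = 0" shows "K = 0"
  using assms[of "transpose K"] trace_tK_zero by blast

lemma trace_cyc3: "trace ((C::real^'n^'m) ** (D::real^'n^'n) ** transpose C ** (Y::real^'m^'m))
   = trace ((transpose C ** Y ** C) ** D)"
proof -
  have "trace (C ** D ** transpose C ** Y) = trace (C ** (D ** transpose C ** Y))"
    by (simp add: matrix_mul_assoc)
  also have "\<dots> = trace ((D ** transpose C ** Y) ** C)" by (rule trace_mul_sym)
  also have "\<dots> = trace (D ** (transpose C ** Y ** C))" by (simp add: matrix_mul_assoc)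
  also have "\<dots> = trace ((transpose C ** Y ** C) ** D)" by (rule trace_mul_sym)
  finally show ?thesis .
qed

lemma minv: assumes "invertible (A::real^'n^'n)" shows "A ** matrix_inv A = mat 1" "matrix_inv A ** A = mat 1"
proof -
  have "\<exists>A'. A ** A' = mat 1 \<and> A' ** A = mat 1" using assms by (auto simp: invertible_def)
  from someI_ex[OF this] show "A ** matrix_inv A = mat 1" "matrix_inv A ** A = mat 1"
    by (auto simp: matrix_inv_def)
qed

lemma minv_symm: assumes "invertible (A::real^'n^'n)" "transpose A = A"
  shows "transpose (matrix_inv A) = matrix_inv A"
proof -
  have l: "transpose (matrix_inv A) ** A = mat 1"
    by (metis assms(2) matrix_transpose_mul minv(1)[OF assms(1)] transpose_mat)
  have "transpose (matrix_inv A) = transpose (matrix_inv A) ** (A ** matrix_inv A)"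
    by (simp add: minv(1)[OF assms(1)])
  also have "\<dots> = matrix_inv A" by (simp add: matrix_mul_assoc l)
  finally show ?thesis .
qed

lemma inner_transpose: "(x::real^'n) \<bullet> (transpose (C::real^'n^'m) *v y) = (C *v x) \<bullet> y"
  by (simp add: inner_vec_def matrix_vector_mult_def transpose_def sum_distrib_left sum_distrib_right
      mult_ac) (rule sum.swap)

lemma psd_cong: assumes "psd (X::real^'m^'m)" shows "psd (transpose (C::real^'n^'m) ** X ** C)"
proof -
  have "x \<bullet> ((transpose C ** X ** C) *v x) = (C *v x) \<bullet> (X *v (C *v x))" for x
    by (metis inner_transpose matrix_vector_mul_assoc)
  then show ?thesis using assms unfolding psd_def
    by (auto simp: matrix_transpose_mul matrix_mul_assoc)
qed

lemma psd_add: "psd A \<Longrightarrow> psd B \<Longrightarrow> psd ((A::real^'n^'n) + B)"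
  unfolding psd_def by (auto simp: tr_add matrix_vector_mult_add_rdistrib inner_add_right add_nonneg_nonneg)

lemma pd_add: "pd A \<Longrightarrow> psd B \<Longrightarrow> pd ((A::real^'n^'n) + B)"
  unfolding psd_def pd_def by (auto simp: tr_add matrix_vector_mult_add_rdistrib inner_add_right add_pos_nonneg)

lemma pd_psd: "pd A \<Longrightarrow> psd A"
  unfolding psd_def pd_def by (metis order.refl inner_zero_left less_imp_le)

lemma psd_scale: "psd A \<Longrightarrow> 0 \<le> c \<Longrightarrow> psd (c *\<^sub>R (A::real^'n^'n))"
proof -
  have "(c *\<^sub>R A) *v x = c *\<^sub>R (A *v x)" for x
    by (simp add: matrix_vector_mult_def vec_eq_iff sum_distrib_left mult_ac)
  then show "psd A \<Longrightarrow> 0 \<le> c \<Longrightarrow> psd (c *\<^sub>R (A::real^'n^'n))"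
    unfolding psd_def by (auto simp: transpose_scalar)
qed

lemma pd_inv: assumes "pd (A::real^'n^'n)" shows "invertible A"
proof -
  have "\<forall>x. A *v x = 0 \<longrightarrow> x = 0"
    using assms unfolding pd_def by (metis inner_zero_right less_irrefl)
  then show ?thesis using invertible_left_inverse matrix_left_invertible_ker by blast
qed

lemma psd_outer: "psd (outer (z::real^'n))"
proof -
  have "x \<bullet> (outer z *v x) = (z \<bullet> x)^2" for x
    by (simp add: outer_def inner_vec_def matrix_vector_mult_def power2_eq_square sum_distrib_left
        sum_distrib_right mult_ac)
  then show ?thesis unfolding psd_def by (simp add: outer_def transpose_def vec_eq_iff mult.commute)
qed



definition E1 :: "real^'n::finite^('n+'m::finite)" where
  "E1 = (\<chi> i j. case i of Inl a \<Rightarrow> (if a = j then 1 else 0) | Inr b \<Rightarrow> 0)"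
definition E2 :: "real^'m::finite^('n::finite+'m)" where
  "E2 = (\<chi> i j. case i of Inl a \<Rightarrow> 0 | Inr b \<Rightarrow> (if b = j then 1 else 0))"

lemma sum_UNIV_sum: "(\<Sum>i\<in>(UNIV::('a::finite+'b::finite) set). f i) = (\<Sum>a\<in>UNIV. f (Inl a)) + (\<Sum>b\<in>UNIV. f (Inr b))"
  by (subst UNIV_Plus_UNIV[symmetric], subst sum.Plus) auto

lemma stackI_E: "stackI (F::real^'n::finite^'m::finite) = E1 + E2 ** F"
  by (auto simp: vec_eq_iff stackI_def E1_def E2_def matrix_matrix_mult_def mat_def sum_UNIV_sum
      if_distrib if_distribR cong: if_cong split: sum.split)

lemma E11: "transpose E1 ** (E1::real^'n::finite^('n+'m::finite)) = mat 1"
  by (auto simp: vec_eq_iff E1_def matrix_matrix_mult_def transpose_def mat_def sum_UNIV_sum)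
    (auto simp: of_bool_def[symmetric] simp del: of_bool_def)
lemma E22: "transpose E2 ** (E2::real^'m::finite^('n::finite+'m)) = mat 1"
  by (auto simp: vec_eq_iff E2_def matrix_matrix_mult_def transpose_def mat_def sum_UNIV_sum)
    (auto simp: of_bool_def[symmetric] simp del: of_bool_def)
lemma E12: "transpose E1 ** (E2::real^'m::finite^('n::finite+'m)) = 0"
  by (auto simp: vec_eq_iff E1_def E2_def matrix_matrix_mult_def transpose_def sum_UNIV_sum)
lemma E21: "transpose E2 ** (E1::real^'n::finite^('n+'m::finite)) = 0"
  by (auto simp: vec_eq_iff E1_def E2_def matrix_matrix_mult_def transpose_def sum_UNIV_sum)

lemma blk_11: "transpose E1 ** blk a b c d ** E1 = a " for a :: "real^'n::finite^'n" and d :: "real^'m::finite^'m"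
  by (auto simp: vec_eq_iff E1_def blk_def matrix_matrix_mult_def transpose_def sum_UNIV_sum
      if_distrib if_distribR cong: if_cong)
lemma blk_12: "transpose E1 ** blk a b c d ** E2 = b " for a :: "real^'n::finite^'n" and d :: "real^'m::finite^'m"
  by (auto simp: vec_eq_iff E1_def E2_def blk_def matrix_matrix_mult_def transpose_def sum_UNIV_sum
      if_distrib if_distribR cong: if_cong)
lemma blk_21: "transpose E2 ** blk a b c d ** E1 = c " for a :: "real^'n::finite^'n" and d :: "real^'m::finite^'m"
  by (auto simp: vec_eq_iff E1_def E2_def blk_def matrix_matrix_mult_def transpose_def sum_UNIV_sum
      if_distrib if_distribR cong: if_cong)
lemma blk_22: "transpose E2 ** blk a b c d ** E2 = d " for a :: "real^'n::finite^'n" and d :: "real^'m::finite^'m"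
  by (auto simp: vec_eq_iff E2_def blk_def matrix_matrix_mult_def transpose_def sum_UNIV_sum
      if_distrib if_distribR cong: if_cong)

lemma hcat_blk: "transpose (hcat A B) ** X ** hcat A B =
   blk (transpose A ** X ** A) (transpose A ** X ** B) (transpose B ** X ** A) (transpose B ** X ** B)"
  by (auto simp: vec_eq_iff hcat_def blk_def matrix_matrix_mult_def transpose_def split: sum.split)

lemma bdiag_blk: "bdiag Q R + blk a b c d = blk (Q + a) b c (R + d)"
  by (auto simp: vec_eq_iff bdiag_def blk_def split: sum.split)

lemma bdiag_add: "bdiag (Q1 + Q2) (R1 + R2) = bdiag Q1 R1 + bdiag Q2 R2"
  by (auto simp: vec_eq_iff bdiag_def blk_def split: sum.split)

lemma bdiag_scale: "bdiag (c *\<^sub>R Q) (c *\<^sub>R R) = c *\<^sub>R bdiag Q R"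
  by (auto simp: vec_eq_iff bdiag_def blk_def split: sum.split)

lemma bdiag_E: "bdiag (Q::real^'n::finite^'n) (R::real^'m::finite^'m) = E1 ** Q ** transpose E1 + E2 ** R ** transpose E2"
  by (auto simp: vec_eq_iff bdiag_def blk_def E1_def E2_def matrix_matrix_mult_def transpose_def
      sum_UNIV_sum if_distrib if_distribR cong: if_cong split: sum.split)

lemma psd_bdiag: "psd Q \<Longrightarrow> psd R \<Longrightarrow> psd (bdiag Q R)"
  unfolding bdiag_E using psd_cong[of Q "transpose E1"] psd_cong[of R "transpose E2"]
  by (intro psd_add) auto

lemma blk_symm: "transpose a = a \<Longrightarrow> transpose d = d \<Longrightarrow> c = transpose b \<Longrightarrow> transpose (blk a b c d) = blk a b c d"
  by (auto simp: vec_eq_iff blk_def transpose_def split: sum.split)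



lemma quad_expand:
  fixes P :: "real^('n::finite+'m::finite)^('n+'m)" and F :: "real^'n^'m"
  shows "transpose (stackI F) ** P ** stackI F =
    transpose E1 ** P ** E1 + transpose E1 ** P ** E2 ** F + transpose F ** (transpose E2 ** P ** E1)
    + transpose F ** (transpose E2 ** P ** E2) ** F"
  by (simp add: stackI_E tr_add matrix_transpose_mul matrix_add_ldistrib mm_add_r matrix_mul_assoc
      add_ac)

lemma ric_abs:
  fixes P :: "real^('n::finite+'m::finite)^('n+'m)"
  assumes sP: "transpose P = P" and inv: "invertible (transpose E2 ** P ** E2)"
  defines "Pinv \<equiv> matrix_inv (transpose E2 ** P ** E2)"
  shows "transpose (stackI (-(Pinv ** (transpose E2 ** P ** E1)))) ** P ** stackI (-(Pinv ** (transpose E2 ** P ** E1)))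
     = transpose E1 ** P ** E1 - transpose E1 ** P ** E2 ** Pinv ** (transpose E2 ** P ** E1)"
proof -
  define P21 where "P21 = transpose E2 ** P ** E1"
  define P12 where "P12 = transpose E1 ** P ** E2"
  define P22 where "P22 = transpose E2 ** P ** E2"
  have sP22: "transpose P22 = P22" unfolding P22_def by (simp add: matrix_transpose_mul sP matrix_mul_assoc)
  have sPi: "transpose Pinv = Pinv" unfolding Pinv_def using minv_symm[OF inv] sP22 P22_def by simp
  have t21: "transpose P21 = P12" unfolding P21_def P12_def by (simp add: matrix_transpose_mul sP matrix_mul_assoc)
  have PiP: "Pinv ** P22 = mat 1" unfolding Pinv_def P22_def using minv(2)[OF inv] .
  define F where "F = -(Pinv ** P21)"
  have tF: "transpose F = - (P12 ** Pinv)" unfolding F_def by (simp add: tr_neg matrix_transpose_mul t21 sPi)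
  have "transpose (stackI F) ** P ** stackI F = transpose E1 ** P ** E1 + P12 ** F + transpose F ** P21 + transpose F ** P22 ** F"
    unfolding quad_expand P12_def P21_def P22_def ..
  also have "\<dots> = transpose E1 ** P ** E1 - P12 ** Pinv ** P21"
  proof -
    have "transpose F ** P22 ** F = P12 ** Pinv ** P21"
    proof -
      have "transpose F ** P22 ** F = P12 ** (Pinv ** P22) ** Pinv ** P21"
        unfolding tF by (simp add: F_def mm_neg_l mm_neg_r matrix_mul_assoc)
      then show ?thesis by (simp add: PiP)
    qed
    then show ?thesis unfolding tF by (simp add: F_def mm_neg_l mm_neg_r matrix_mul_assoc)
  qed
  finally show ?thesis unfolding F_def P12_def P21_def by (simp add: matrix_mul_assoc)
qed



definition good :: "('n::finite, 'm::finite) lqprob \<Rightarrow> bool" where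
  "good p \<longleftrightarrow> psd (cQf p) \<and> psd (tQf p) \<and> (\<forall>k<hor p. psd (cQ p k)) \<and> (\<forall>k<hor p. psd (tQ p k))
     \<and> (\<forall>lam\<ge>0. \<forall>k<hor p. pd (cR p k + lam *\<^sub>R tR p k))"

lemma Plam_alt: "Plam p lam k = bdiag (cQ p k + lam *\<^sub>R tQ p k) (cR p k + lam *\<^sub>R tR p k)
   + transpose (hcat (sA p) (sB p)) ** Xlam p lam (Suc k) ** hcat (sA p) (sB p)"
  unfolding Plam_def Let_def hcat_blk bdiag_blk ..

lemma Plam_22: "transpose E2 ** Plam p lam k ** E2 = cR p k + lam *\<^sub>R tR p k + transpose (sB p) ** Xlam p lam (Suc k) ** sB p"
  unfolding Plam_def Let_def blk_22 ..
lemma Plam_21: "transpose E2 ** Plam p lam k ** E1 = transpose (sB p) ** Xlam p lam (Suc k) ** sA p"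
  unfolding Plam_def Let_def blk_21 ..
lemma Plam_11: "transpose E1 ** Plam p lam k ** E1 = cQ p k + lam *\<^sub>R tQ p k + transpose (sA p) ** Xlam p lam (Suc k) ** sA p"
  unfolding Plam_def Let_def blk_11 ..
lemma Plam_12: "transpose E1 ** Plam p lam k ** E2 = transpose (sA p) ** Xlam p lam (Suc k) ** sB p"
  unfolding Plam_def Let_def blk_12 ..

lemma Plam_props:
  assumes g: "good p" and lam: "0 \<le> lam" and k: "k < hor p" and X: "psd (Xlam p lam (Suc k))"
  shows "psd (Plam p lam k)" "invertible (transpose E2 ** Plam p lam k ** E2)" "transpose (Plam p lam k) = Plam p lam k"
proof -
  have pdR: "pd (cR p k + lam *\<^sub>R tR p k)" using g lam k by (auto simp: good_def)
  have Q: "psd (cQ p k + lam *\<^sub>R tQ p k)" using g lam k by (auto simp: good_def intro!: psd_add psd_scale)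
  show "psd (Plam p lam k)" unfolding Plam_alt
    by (rule psd_add[OF psd_bdiag[OF Q pd_psd[OF pdR]] psd_cong[OF X]])
  then show "transpose (Plam p lam k) = Plam p lam k" by (simp add: psd_def)
  show "invertible (transpose E2 ** Plam p lam k ** E2)" unfolding Plam_22
    by (rule pd_inv[OF pd_add[OF pdR psd_cong[OF X]]])
qed

lemma Xlam_Suc: assumes "k < hor p"
  shows "Xlam p lam k = (let X = Xlam p lam (Suc k); A = sA p; B = sB p in
     transpose A ** X ** A
     - transpose A ** X ** B ** matrix_inv (cR p k + lam *\<^sub>R tR p k + transpose B ** X ** B) ** transpose B ** X ** A
     + cQ p k + lam *\<^sub>R tQ p k)"
proof -
  have e: "hor p - k = Suc (hor p - Suc k)" using assms by simp
  have "hor p - Suc (hor p - Suc k) = k" using assms by simp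
  then show ?thesis unfolding Xlam_def e Xb.simps Let_def by simp
qed

lemma Flam_alt: "Flam p lam k = - (matrix_inv (transpose E2 ** Plam p lam k ** E2) ** (transpose E2 ** Plam p lam k ** E1))"
  unfolding Plam_22 Plam_21 Flam_def Let_def by (simp add: matrix_mul_assoc)

lemma ric:
  assumes g: "good p" and lam: "0 \<le> lam" and k: "k < hor p" and X: "psd (Xlam p lam (Suc k))"
  shows "Xlam p lam k = transpose (stackI (Flam p lam k)) ** Plam p lam k ** stackI (Flam p lam k)"
  using ric_abs[OF Plam_props(3)[OF assms] Plam_props(2)[OF assms]]
  unfolding Flam_alt[symmetric] Xlam_Suc[OF k]
  unfolding Plam_11 Plam_12 Plam_21 Plam_22 Let_def
  by (simp add: matrix_mul_assoc algebra_simps)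

lemma Xlam_psd:
  assumes g: "good p" and lam: "0 \<le> lam" and k: "k \<le> hor p"
  shows "psd (Xlam p lam k)"
  using k
proof (induction k rule: inc_induct)
  case base
  then show ?case using g lam by (simp add: Xlam_def good_def psd_add psd_scale)
next
  case (step n)
  show ?case unfolding ric[OF g lam step(2) step(3)]
    by (intro psd_cong Plam_props[OF g lam step(2) step(3)])
qed



lemma line_zero:
  fixes f :: "'a::real_normed_vector \<Rightarrow> real"
  assumes d: "(f has_derivative (\<lambda>_. 0)) (at x within T)"
    and inT: "\<And>t. x + t *\<^sub>R h \<in> T"
    and fe: "\<And>t. f (x + t *\<^sub>R h) = f x + t * a + t*t * c"
  shows "a = 0"
proof -
  define g where "g = (\<lambda>t::real. x + t *\<^sub>R h)"
  have gd: "(g has_derivative (\<lambda>t. t *\<^sub>R h)) (at 0 within UNIV)"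
    unfolding g_def by (intro has_derivative_add[where f'="\<lambda>_. 0", simplified] has_derivative_const bounded_linear_imp_has_derivative bounded_linear_scaleR_left)
  have sub: "g ` UNIV \<subseteq> T" using inT by (auto simp: g_def)
  have g0: "g 0 = x" by (simp add: g_def)
  have "(f has_derivative (\<lambda>_. 0)) (at (g 0) within (g ` UNIV))"
    unfolding g0 by (rule has_derivative_subset[OF d sub])
  from diff_chain_within[OF gd this]
  have "((f \<circ> g) has_derivative (\<lambda>_. 0)) (at 0)" by (simp add: comp_def)
  moreover have "f \<circ> g = (\<lambda>t. f x + t * a + t*t * c)"
  proof
    fix t show "(f \<circ> g) t = f x + t * a + t*t * c" using fe[of t] by (simp add: g_def power2_eq_square)
  qed
  ultimately have d1: "((\<lambda>t. f x + t * a + t*t * c) has_derivative (\<lambda>_. 0)) (at 0)" by simp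
  have d2: "((\<lambda>t. f x + t * a + t*t * c) has_field_derivative a) (at (0::real))"
  proof -
    have "((\<lambda>t. f x + t * a + t*t * c) has_field_derivative (0 + 1 * a + (1 * 0 + 1*0) * c)) (at (0::real))"
      by (intro DERIV_add DERIV_const DERIV_cmult_right DERIV_mult DERIV_ident DERIV_cmult)
    then show ?thesis by simp
  qed
  have "DERIV (\<lambda>t. f x + t * a + t*t * c) 0 :> 0"
  proof -
    have "(\<lambda>_::real. 0::real) = (*) 0" by auto
    then show ?thesis using d1 by (simp add: has_field_derivative_def)
  qed
  from DERIV_unique[OF d2 this] show ?thesis .
qed

lemma bil_zero:
  fixes f :: "'a::euclidean_space \<Rightarrow> real"
  assumes b: "bilinear b" and fe: "\<And>y. f y = f x + b (y - x) (y - x)"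
  shows "(f has_derivative (\<lambda>_. 0)) (at x within T)"
proof -
  define c where "c = f x"
  have bb: "bounded_bilinear b" using b bilinear_conv_bounded_bilinear by blast
  have dd: "((\<lambda>y. y - x) has_derivative (\<lambda>h. h)) (at x within T)"
    by (rule has_derivative_eq_rhs[OF has_derivative_diff[OF has_derivative_ident has_derivative_const]]) simp
  have "((\<lambda>y. b (y - x) (y - x)) has_derivative (\<lambda>h. b (x - x) h + b h (x - x))) (at x within T)"
    by (rule bounded_bilinear.FDERIV[OF bb dd dd])
  then have "((\<lambda>y. b (y - x) (y - x)) has_derivative (\<lambda>h. 0)) (at x within T)"
    using bounded_bilinear.zero_left[OF bb] bounded_bilinear.zero_right[OF bb] by simp
  from has_derivative_add[OF has_derivative_const this]
  have "((\<lambda>y. c + b (y - x) (y - x)) has_derivative (\<lambda>h. 0)) (at x within T)" by simp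
  moreover have "f = (\<lambda>y. c + b (y - x) (y - x))"
  proof
    fix y show "f y = c + b (y - x) (y - x)" using fe[of y] unfolding c_def .
  qed
  ultimately show ?thesis by simp
qed

lemma const_zero: assumes "\<And>y. f y = f x" shows "(f has_derivative (\<lambda>_. 0)) (at x within T)"
proof -
  define c where "c = f x"
  have "f = (\<lambda>_. c)" unfolding c_def using assms by (intro ext) (rule assms)
  then show ?thesis by (simp add: has_derivative_const)
qed



lemma sum_upd:
  fixes f :: "'a \<Rightarrow> 'b \<Rightarrow> real"
  assumes "finite A"
  shows "(\<Sum>j\<in>A. f j ((S(k:=X)) (g j))) = (\<Sum>j\<in>A. f j (S (g j))) + (\<Sum>j\<in>{j\<in>A. g j = k}. f j X - f j (S k))"
proof -
  have "(\<Sum>j\<in>A. f j ((S(k:=X)) (g j))) = (\<Sum>j\<in>A. f j (S (g j)) + (if g j = k then f j X - f j (S k) else 0))"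
    by (rule sum.cong) auto
  also have "\<dots> = (\<Sum>j\<in>A. f j (S (g j))) + (\<Sum>j\<in>A. (if g j = k then f j X - f j (S k) else 0))"
    by (rule sum.distrib)
  also have "(\<Sum>j\<in>A. (if g j = k then f j X - f j (S k) else 0)) = (\<Sum>j\<in>{j\<in>A. g j = k}. f j X - f j (S k))"
    using assms by (simp add: sum.inter_filter)
  finally show ?thesis .
qed

lemma trace_lin: "trace ((A::real^'n^'n) ** X) - trace (A ** Y) = trace (A ** (X - Y))"
  by (simp add: mm_diff_l trace_sub)
lemma trace_lin': "trace ((X::real^'n^'n) ** A) - trace (Y ** A) = trace ((X - Y) ** A)"
  by (simp add: mm_diff_r trace_sub)

abbreviation GG where "GG p \<equiv> hcat (sA p) (sB p)"

lemma quad_diff: "trace ((C::real^'n^'m) ** (X::real^'n^'n) ** transpose C ** Y) - trace (C ** Z ** transpose C ** Y)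
   = trace ((transpose C ** Y ** C) ** (X - Z))"
proof -
  have "C ** X ** transpose C ** Y - C ** Z ** transpose C ** Y = C ** (X - Z) ** transpose C ** Y"
    by (simp add: mm_diff_l mm_diff_r)
  then have "trace (C ** X ** transpose C ** Y) - trace (C ** Z ** transpose C ** Y) = trace (C ** (X - Z) ** transpose C ** Y)"
    by (simp flip: trace_sub)
  then show ?thesis by (simp add: trace_cyc3)
qed

lemma qcost_upd:
  assumes k: "k < hor p"
  shows "qcost p Qf Q R (S(k:=X)) = qcost p Qf Q R S
     + (if k = hor p - 1 then trace ((transpose (GG p) ** Qf ** GG p) ** (X - S k)) else 0)
     + trace (bdiag (Q k) (R k) ** (X - S k))"
proof -
  have s: "(\<Sum>j<hor p. trace (bdiag (Q j) (R j) ** (S(k:=X)) j)) =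
     (\<Sum>j<hor p. trace (bdiag (Q j) (R j) ** S j)) + trace (bdiag (Q k) (R k) ** (X - S k))"
  proof -
    have "{j \<in> {..<hor p}. j = k} = {k}" using k by auto
    then show ?thesis
      using sum_upd[of "{..<hor p}" "\<lambda>j Y. trace (bdiag (Q j) (R j) ** Y)" S k X "\<lambda>j. j"]
      by (simp add: trace_lin)
  qed
  have f: "trace (Qf ** (GG p ** (S(k:=X)) (hor p - 1) ** transpose (GG p) + sW p)) =
      trace (Qf ** (GG p ** S (hor p - 1) ** transpose (GG p) + sW p))
      + (if k = hor p - 1 then trace ((transpose (GG p) ** Qf ** GG p) ** (X - S k)) else 0)"
  proof (cases "k = hor p - 1")
    case True
    have "trace (Qf ** (GG p ** X ** transpose (GG p) + sW p)) - trace (Qf ** (GG p ** S k ** transpose (GG p) + sW p))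
       = trace (Qf ** (GG p ** X ** transpose (GG p) + sW p - (GG p ** S k ** transpose (GG p) + sW p)))"
      by (rule trace_lin)
    also have "\<dots> = trace (Qf ** (GG p ** X ** transpose (GG p)) - Qf ** (GG p ** S k ** transpose (GG p)))"
      by (simp add: mm_diff_l)
    also have "\<dots> = trace ((GG p ** X ** transpose (GG p) ** Qf)) - trace ((GG p ** S k ** transpose (GG p)) ** Qf)"
      by (simp add: trace_sub trace_mul_sym[of Qf])
    also have "\<dots> = trace ((transpose (GG p) ** Qf ** GG p) ** (X - S k))"
      by (rule quad_diff)
    finally show ?thesis using True by simp
  qed simp
  show ?thesis unfolding qcost_def s f by simp
qed



definition Yk where "Yk p lam F P k = (if k = hor p - 1 then cQf p + lam *\<^sub>R tQf p
   else transpose (stackI (F (Suc k))) ** P (Suc k) ** stackI (F (Suc k)))"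
definition Wk where "Wk p lam F P k = bdiag (cQ p k + lam *\<^sub>R tQ p k) (cR p k + lam *\<^sub>R tR p k)
   + transpose (GG p) ** Yk p lam F P k ** GG p"

lemma Phi_diff: "trace (Phi p F X ** P) - trace (Phi p F Y ** P) =
   trace ((transpose (GG p) ** (transpose (stackI F) ** P ** stackI F) ** GG p) ** (X - Y))"
proof -
  have e: "Phi p F Z = (stackI F ** GG p) ** Z ** transpose (stackI F ** GG p) + stackI F ** sW p ** transpose (stackI F)" for Z
    by (simp add: Phi_def matrix_add_ldistrib mm_add_r matrix_transpose_mul matrix_mul_assoc)
  have "trace (Phi p F X ** P) - trace (Phi p F Y ** P) =
     trace ((stackI F ** GG p) ** X ** transpose (stackI F ** GG p) ** P) - trace ((stackI F ** GG p) ** Y ** transpose (stackI F ** GG p) ** P)"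
    unfolding e by (simp add: mm_add_r trace_add)
  also have "\<dots> = trace ((transpose (stackI F ** GG p) ** P ** (stackI F ** GG p)) ** (X - Y))"
    by (rule quad_diff)
  finally show ?thesis by (simp add: matrix_transpose_mul matrix_mul_assoc)
qed

lemma Lag_S:
  assumes k: "k < hor p"
  shows "Lag p \<gamma> (S(k:=X)) F P lam = Lag p \<gamma> S F P lam + trace ((Wk p lam F P k - P k) ** (X - S k))"
proof -
  define D where "D = X - S k"
  define N where "N = hor p"
  have J: "Jp p (S(k:=X)) = Jp p S + (if k = N - 1 then trace ((transpose (GG p) ** cQf p ** GG p) ** D) else 0)
      + trace (bdiag (cQ p k) (cR p k) ** D)"
    unfolding Jp_def D_def N_def by (rule qcost_upd[OF k])
  have C: "Cc p (S(k:=X)) = Cc p S + (if k = N - 1 then trace ((transpose (GG p) ** tQf p ** GG p) ** D) else 0)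
      + trace (bdiag (tQ p k) (tR p k) ** D)"
    unfolding Cc_def D_def N_def by (rule qcost_upd[OF k])
  have sA: "(\<Sum>j\<in>{1..<N}. trace (Phi p (F j) ((S(k:=X)) (j - 1)) ** P j)) =
     (\<Sum>j\<in>{1..<N}. trace (Phi p (F j) (S (j - 1)) ** P j))
     + (if Suc k < N then trace ((transpose (GG p) ** (transpose (stackI (F (Suc k))) ** P (Suc k) ** stackI (F (Suc k))) ** GG p) ** D) else 0)"
  proof -
    have "{j \<in> {1..<N}. j - 1 = k} = (if Suc k < N then {Suc k} else {})" by auto
    then show ?thesis
      using sum_upd[of "{1..<N}" "\<lambda>j Y. trace (Phi p (F j) Y ** P j)" S k X "\<lambda>j. j - 1"]
      by (simp add: Phi_diff D_def)
  qed
  have sB: "(\<Sum>j\<in>{1..<N}. trace ((S(k:=X)) j ** P j)) =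
     (\<Sum>j\<in>{1..<N}. trace (S j ** P j)) + (if 1 \<le> k then trace (P k ** D) else 0)"
  proof -
    have "{j \<in> {1..<N}. j = k} = (if 1 \<le> k then {k} else {})" using k N_def by auto
    then show ?thesis
      using sum_upd[of "{1..<N}" "\<lambda>j Y. trace (Y ** P j)" S k X "\<lambda>j. j"]
      by (simp add: trace_lin' D_def trace_mul_sym[of _ "P k"])
  qed
  have sum1: "(\<Sum>j\<in>{1..<N}. trace ((Phi p (F j) ((S(k:=X)) (j - 1)) - (S(k:=X)) j) ** P j)) =
     (\<Sum>j\<in>{1..<N}. trace (Phi p (F j) ((S(k:=X)) (j - 1)) ** P j)) - (\<Sum>j\<in>{1..<N}. trace ((S(k:=X)) j ** P j))"
    by (simp add: mm_diff_r trace_sub sum_subtractf)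
  have sum0: "(\<Sum>j\<in>{1..<N}. trace ((Phi p (F j) (S (j - 1)) - S j) ** P j)) =
     (\<Sum>j\<in>{1..<N}. trace (Phi p (F j) (S (j - 1)) ** P j)) - (\<Sum>j\<in>{1..<N}. trace (S j ** P j))"
    by (simp add: mm_diff_r trace_sub sum_subtractf)
  have T0: "trace ((S0of p (F 0) - (S(k:=X)) 0) ** P 0) = trace ((S0of p (F 0) - S 0) ** P 0)
      - (if k = 0 then trace (P k ** D) else 0)"
    by (auto simp: mm_diff_r mm_diff_l trace_sub D_def trace_mul_sym[of _ "P 0"])
  have W: "trace (Wk p lam F P k ** D) = trace (bdiag (cQ p k) (cR p k) ** D) + lam * trace (bdiag (tQ p k) (tR p k) ** D)
     + (if k = N - 1 then trace ((transpose (GG p) ** cQf p ** GG p) ** D) + lam * trace ((transpose (GG p) ** tQf p ** GG p) ** D)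
        else trace ((transpose (GG p) ** (transpose (stackI (F (Suc k))) ** P (Suc k) ** stackI (F (Suc k))) ** GG p) ** D))"
    by (simp add: Wk_def Yk_def N_def bdiag_add bdiag_scale mm_add_r matrix_add_ldistrib trace_add
        matrix_scalar_ac scalar_matrix_assoc[symmetric] trace_scaleR)
  have e2: "trace ((Wk p lam F P k - P k) ** D) = trace (Wk p lam F P k ** D) - trace (P k ** D)"
    by (simp add: trace_lin')
  have "Suc k < N \<longleftrightarrow> k \<noteq> N - 1" using k N_def by auto
  then show ?thesis
    unfolding Lag_def D_def[symmetric] N_def[symmetric] J C sum1 sum0 sA sB T0 e2 W
    by (cases "k = 0"; cases "k = N - 1"; simp add: algebra_simps)
qed



definition Mk where "Mk p S (k::nat) = (if k = 0 then sV p + outer (sz p) else GG p ** S (k - 1) ** transpose (GG p) + sW p)"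
definition qF where "qF p S P (k::nat) G' = trace (stackI G' ** Mk p S k ** transpose (stackI G') ** P k)"

lemma Lag_F:
  assumes k: "k < hor p"
  shows "Lag p \<gamma> S (F(k:=G')) P lam = Lag p \<gamma> S F P lam + qF p S P k G' - qF p S P k (F k)"
proof -
  define N where "N = hor p"
  have s: "(\<Sum>j\<in>{1..<N}. trace ((Phi p ((F(k:=G')) j) (S (j - 1)) - S j) ** P j)) =
     (\<Sum>j\<in>{1..<N}. trace ((Phi p (F j) (S (j - 1)) - S j) ** P j))
     + (if 1 \<le> k then qF p S P k G' - qF p S P k (F k) else 0)"
  proof -
    have "{j \<in> {1..<N}. j = k} = (if 1 \<le> k then {k} else {})" using k N_def by auto
    moreover have "1 \<le> k \<Longrightarrow> trace ((Phi p Z (S (k - 1)) - S k) ** P k) = qF p S P k Z - trace (S k ** P k)" for Z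
      by (simp add: qF_def Mk_def Phi_def mm_diff_r trace_sub matrix_mul_assoc)
    ultimately show ?thesis
      using sum_upd[of "{1..<N}" "\<lambda>j Y. trace ((Phi p Y (S (j - 1)) - S j) ** P j)" F k G' "\<lambda>j. j"]
      by simp
  qed
  have t: "trace ((S0of p ((F(k:=G')) 0) - S 0) ** P 0) = trace ((S0of p (F 0) - S 0) ** P 0)
     + (if k = 0 then qF p S P k G' - qF p S P k (F k) else 0)"
    by (auto simp: qF_def Mk_def S0of_def mm_diff_r trace_sub matrix_mul_assoc)
  show ?thesis unfolding Lag_def N_def[symmetric] s t Jp_def Cc_def
    by (cases "k = 0") auto
qed

lemma q_expand:
  fixes P :: "real^('n::finite+'m::finite)^('n+'m)" and M :: "real^'n^'n"
  assumes sM: "transpose M = M" and sP: "transpose P = P"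
  shows "trace (stackI (F + H) ** M ** transpose (stackI (F + H)) ** P) =
     trace (stackI F ** M ** transpose (stackI F) ** P) + 2 * trace (H ** (M ** transpose (stackI F) ** P ** E2))
     + trace (H ** M ** transpose H ** (transpose E2 ** P ** E2))"
proof -
  define L where "L = stackI F"
  have sF: "stackI (F + H) = L + E2 ** H" unfolding L_def stackI_E by (simp add: matrix_add_ldistrib)
  have "stackI (F + H) ** M ** transpose (stackI (F + H)) ** P =
     L ** M ** transpose L ** P + L ** M ** transpose H ** transpose E2 ** P + E2 ** H ** M ** transpose L ** P
     + E2 ** H ** M ** transpose H ** transpose E2 ** P"
    unfolding sF by (simp add: tr_add matrix_transpose_mul matrix_add_ldistrib mm_add_r matrix_mul_assoc add_ac)
  moreover have "trace (L ** M ** transpose H ** transpose E2 ** P) = trace (H ** (M ** transpose L ** P ** E2))"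
  proof -
    have "trace (L ** M ** transpose H ** transpose E2 ** P) = trace (transpose (L ** M ** transpose H ** transpose E2 ** P))"
      by (simp add: trace_transpose)
    also have "\<dots> = trace ((P ** E2) ** (H ** M ** transpose L))"
      by (simp add: matrix_transpose_mul sM sP matrix_mul_assoc)
    also have "\<dots> = trace ((H ** M ** transpose L) ** (P ** E2))" by (rule trace_mul_sym)
    finally show ?thesis by (simp add: matrix_mul_assoc)
  qed
  moreover have "trace (E2 ** H ** M ** transpose L ** P) = trace (H ** (M ** transpose L ** P ** E2))"
  proof -
    have "trace (E2 ** H ** M ** transpose L ** P) = trace (E2 ** (H ** M ** transpose L ** P))"
      by (simp add: matrix_mul_assoc)
    also have "\<dots> = trace ((H ** M ** transpose L ** P) ** E2)" by (rule trace_mul_sym)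
    finally show ?thesis by (simp add: matrix_mul_assoc)
  qed
  moreover have "trace (E2 ** H ** M ** transpose H ** transpose E2 ** P) = trace (H ** M ** transpose H ** (transpose E2 ** P ** E2))"
  proof -
    have "trace (E2 ** H ** M ** transpose H ** transpose E2 ** P) = trace (E2 ** (H ** M ** transpose H ** transpose E2 ** P))"
      by (simp add: matrix_mul_assoc)
    also have "\<dots> = trace ((H ** M ** transpose H ** transpose E2 ** P) ** E2)" by (rule trace_mul_sym)
    finally show ?thesis by (simp add: matrix_mul_assoc)
  qed
  ultimately show ?thesis unfolding L_def by (simp add: trace_add)
qed



lemma psd_stack: "psd X \<Longrightarrow> psd (stackI F ** X ** transpose (stackI F))"
  using psd_cong[of X "transpose (stackI F)"] by simp

lemma psd_GSG: "psd S \<Longrightarrow> psd (GG p ** S ** transpose (GG p))"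
  using psd_cong[of S "transpose (GG p)"] by simp

lemma dyn_psd:
  assumes V: "pd (sV p)" and W: "pd (sW p)" and d: "dyn_ok p S F"
  shows "k < hor p \<Longrightarrow> psd (S k)"
proof (induction k)
  case 0
  then show ?case using d unfolding dyn_ok_def S0of_def
    using psd_stack[OF psd_add[OF pd_psd[OF V] psd_outer]] by auto
next
  case (Suc k)
  then have "S (Suc k) = Phi p (F (Suc k)) (S k)" using d unfolding dyn_ok_def by auto
  then show ?case using Suc psd_stack[OF psd_add[OF psd_GSG pd_psd[OF W]]] unfolding Phi_def
    by auto
qed

lemma Mk_pd:
  assumes V: "pd (sV p)" and W: "pd (sW p)" and S: "1 \<le> k \<Longrightarrow> psd (S (k - 1))"
  shows "pd (Mk p S k)"
proof (cases "k = 0")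
  case True
  then show ?thesis unfolding Mk_def using pd_add[OF V psd_outer] by simp
next
  case False
  have "1 \<le> k" using False by simp
  then have "psd (S (k - 1))" by (rule S)
  then have "pd (sW p + GG p ** S (k - 1) ** transpose (GG p))" using pd_add[OF W psd_GSG] by blast
  then show ?thesis unfolding Mk_def using False by (simp add: add.commute)
qed

lemma scale_q: "trace ((t *\<^sub>R H) ** (K::real^'n^'m)) = t * trace (H ** K)"
  by (simp add: scalar_matrix_assoc[symmetric] trace_scaleR)

lemma statS_imp:
  assumes stat: "((\<lambda>X. Lag p \<gamma> (S(k:=X)) F P lam) has_derivative (\<lambda>_. 0)) (at (S k) within {X. symm X})"
    and k: "k < hor p" and sS: "symm (S k)" and sh: "symm (Wk p lam F P k - P k)"
  shows "P k = Wk p lam F P k"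
proof -
  define h where "h = Wk p lam F P k - P k"
  have "trace (h ** h) = 0"
  proof (rule line_zero[OF stat])
    fix t :: real
    show "S k + t *\<^sub>R h \<in> {X. symm X}" using sS sh
      by (simp add: symm_def h_def tr_add transpose_scalar)
    show "Lag p \<gamma> (S(k := S k + t *\<^sub>R h)) F P lam = Lag p \<gamma> (S(k := S k)) F P lam + t * trace (h ** h) + t * t * 0"
      unfolding Lag_S[OF k] h_def by (simp add: scale_q trace_zero matrix_scalar_ac trace_scaleR)
  qed
  then have "trace (transpose h ** h) = 0" using sh by (simp add: h_def symm_def)
  then have "h = 0" by (rule trace_tK_zero)
  then show ?thesis by (simp add: h_def)
qed

lemma scale_q2: "trace ((t *\<^sub>R H) ** (M::real^'n^'n) ** transpose (t *\<^sub>R H) ** (R::real^'m^'m)) = t * t * trace (H ** M ** transpose H ** R)"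
  by (simp add: scalar_matrix_assoc[symmetric] matrix_scalar_ac transpose_scalar trace_scaleR)

lemma statF_imp:
  assumes stat: "((\<lambda>G. Lag p \<gamma> S (F(k := G)) P lam) has_derivative (\<lambda>_. 0)) (at (F k))"
    and k: "k < hor p" and sM: "transpose (Mk p S k) = Mk p S k" and iM: "invertible (Mk p S k)"
    and sP: "transpose (P k) = P k"
  shows "transpose E2 ** P k ** stackI (F k) = 0"
proof -
  define K where "K = Mk p S k ** transpose (stackI (F k)) ** P k ** E2"
  have "2 * trace (H ** K) = 0" for H
  proof (rule line_zero[OF stat])
    fix t :: real
    show "F k + t *\<^sub>R H \<in> UNIV" by simp
    show "Lag p \<gamma> S (F(k := F k + t *\<^sub>R H)) P lam = Lag p \<gamma> S (F(k := F k)) P lam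
       + t * (2 * trace (H ** K)) + t * t * trace (H ** Mk p S k ** transpose H ** (transpose E2 ** P k ** E2))"
      unfolding Lag_F[OF k] qF_def q_expand[OF sM sP] K_def scale_q scale_q2 by simp
  qed
  then have "K = 0" by (intro trace_orth) simp
  then have "matrix_inv (Mk p S k) ** K = 0" by simp
  then have "transpose (stackI (F k)) ** P k ** E2 = 0"
    unfolding K_def by (simp add: matrix_mul_assoc minv(2)[OF iM])
  then have "transpose (transpose (stackI (F k)) ** P k ** E2) = 0" by (simp add: tr_zero)
  then show ?thesis by (simp add: matrix_transpose_mul sP matrix_mul_assoc)
qed

lemma bil_q: "bilinear (\<lambda>U V. trace (U ** (M::real^'n^'n) ** transpose V ** (R::real^'m^'m)))"
  unfolding bilinear_def linear_iff
  by (simp add: mm_add_r matrix_add_ldistrib tr_add trace_add transpose_scalar scalar_matrix_assoc[symmetric]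
      matrix_scalar_ac trace_scaleR)

lemma statF_suff:
  assumes k: "k < hor p" and sM: "transpose (Mk p S k) = Mk p S k"
    and sP: "transpose (P k) = P k" and z: "transpose E2 ** P k ** stackI (F k) = 0"
  shows "((\<lambda>G. Lag p \<gamma> S (F(k := G)) P lam) has_derivative (\<lambda>_. 0)) (at (F k))"
proof -
  have "transpose (transpose E2 ** P k ** stackI (F k)) = 0" using z by (simp add: tr_zero)
  then have z': "transpose (stackI (F k)) ** P k ** E2 = 0" by (simp add: matrix_transpose_mul sP matrix_mul_assoc)
  show ?thesis
  proof (rule bil_zero[OF bil_q[of "Mk p S k" "transpose E2 ** P k ** E2"]])
    fix G
    have "F k + (G - F k) = G" by simp
    then have "qF p S P k G = qF p S P k (F k) + 2 * trace ((G - F k) ** (Mk p S k ** transpose (stackI (F k)) ** P k ** E2))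
       + trace ((G - F k) ** Mk p S k ** transpose (G - F k) ** (transpose E2 ** P k ** E2))"
      unfolding qF_def using q_expand[OF sM sP, of "F k" "G - F k"] by simp
    then show "Lag p \<gamma> S (F(k := G)) P lam = Lag p \<gamma> S (F(k := F k)) P lam
      + trace ((G - F k) ** Mk p S k ** transpose (G - F k) ** (transpose E2 ** P k ** E2))"
      unfolding Lag_F[OF k] using z' by (simp add: matrix_mul_assoc[symmetric] trace_zero)
  qed
qed



lemma Wk_eq:
  assumes g: "good p" and lam: "0 \<le> lam" and k: "k < hor p"
    and nxt: "Suc k < hor p \<Longrightarrow> P (Suc k) = Plam p lam (Suc k) \<and> F (Suc k) = Flam p lam (Suc k)"
  shows "Wk p lam F P k = Plam p lam k"
proof -
  have "Yk p lam F P k = Xlam p lam (Suc k)"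
  proof (cases "k = hor p - 1")
    case True
    then have "hor p - Suc k = 0" using k by simp
    then show ?thesis using True by (simp add: Yk_def Xlam_def)
  next
    case False
    then have sk: "Suc k < hor p" using k by simp
    have X: "psd (Xlam p lam (Suc (Suc k)))" using sk by (intro Xlam_psd[OF g lam]) simp
    show ?thesis using False nxt[OF sk] ric[OF g lam sk X] by (simp add: Yk_def)
  qed
  then show ?thesis unfolding Wk_def Plam_alt by simp
qed

lemma Flam_zero:
  assumes g: "good p" and lam: "0 \<le> lam" and k: "k < hor p"
  shows "transpose E2 ** Plam p lam k ** stackI (Flam p lam k) = 0"
proof -
  have X: "psd (Xlam p lam (Suc k))" using k by (intro Xlam_psd[OF g lam]) simp
  note inv = Plam_props(2)[OF g lam k X]
  define P21 where "P21 = transpose E2 ** Plam p lam k ** E1"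
  define P22 where "P22 = transpose E2 ** Plam p lam k ** E2"
  have i: "P22 ** matrix_inv P22 = mat 1" unfolding P22_def by (rule minv(1)[OF inv])
  have "transpose E2 ** Plam p lam k ** stackI (Flam p lam k) = P21 + P22 ** (- (matrix_inv P22 ** P21))"
    unfolding stackI_E Flam_alt P21_def P22_def by (simp add: matrix_add_ldistrib matrix_mul_assoc)
  also have "\<dots> = P21 - (P22 ** matrix_inv P22) ** P21" by (simp add: mm_neg_r matrix_mul_assoc)
  also have "\<dots> = 0" by (simp add: i)
  finally show ?thesis .
qed

lemma F_from_zero:
  assumes g: "good p" and lam: "0 \<le> lam" and k: "k < hor p"
    and z: "transpose E2 ** Plam p lam k ** stackI F = 0"
  shows "F = Flam p lam k"
proof -
  have X: "psd (Xlam p lam (Suc k))" using k by (intro Xlam_psd[OF g lam]) simp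
  note inv = Plam_props(2)[OF g lam k X]
  define P21 where "P21 = transpose E2 ** Plam p lam k ** E1"
  define P22 where "P22 = transpose E2 ** Plam p lam k ** E2"
  have "P21 + P22 ** F = 0" using z unfolding stackI_E P21_def P22_def
    by (simp add: matrix_add_ldistrib matrix_mul_assoc)
  then have "matrix_inv P22 ** (P21 + P22 ** F) = 0" by simp
  moreover have "matrix_inv P22 ** (P22 ** F) = F"
  proof -
    have "matrix_inv P22 ** P22 = mat 1" unfolding P22_def by (rule minv(2)[OF inv])
    then show ?thesis by (simp add: matrix_mul_assoc)
  qed
  ultimately have "matrix_inv P22 ** P21 + F = 0"
    by (simp only: matrix_add_ldistrib)
  then have "F = - (matrix_inv P22 ** P21)" by (simp add: eq_neg_iff_add_eq_0 add.commute)
  then show ?thesis unfolding Flam_alt P21_def P22_def .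
qed

lemma Slam_eq:
  assumes d: "dyn_ok p S F" and F: "\<forall>k<hor p. F k = Flam p lam k"
  shows "k < hor p \<Longrightarrow> S k = Slam p lam k"
proof (induction k)
  case 0
  then show ?case using d F by (simp add: dyn_ok_def)
next
  case (Suc k)
  then show ?case using d F by (simp add: dyn_ok_def)
qed

lemma Cc_cong:
  assumes N: "1 \<le> hor p" and e: "\<forall>k<hor p. S k = S' k"
  shows "Cc p S = Cc p S'"
proof -
  have "S (hor p - 1) = S' (hor p - 1)" using N e by simp
  moreover have "(\<Sum>k<hor p. trace (bdiag (tQ p k) (tR p k) ** S k)) = (\<Sum>k<hor p. trace (bdiag (tQ p k) (tR p k) ** S' k))"
    using e by (intro sum.cong) auto
  ultimately show ?thesis unfolding Cc_def qcost_def by simp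
qed



theorem proposition4:
  fixes p :: "('n::finite, 'm::finite) lqprob" and \<gamma> :: real
  assumes N: "1 \<le> hor p"
    and Qf: "psd (cQf p)" and tQf: "psd (tQf p)"
    and Q: "\<forall>k<hor p. psd (cQ p k)" and tQ: "\<forall>k<hor p. psd (tQ p k)"
    and R: "\<forall>lam\<ge>0. \<forall>k<hor p. pd (cR p k + lam *\<^sub>R tR p k)"
    and V: "pd (sV p)" and W: "pd (sW p)"
    and strict: "\<exists>S F. dyn_ok p S F \<and> Cc p S < \<gamma>"
    and nontriv: "Cc p (Slam p 0) > \<gamma>"
  shows "{(lam, S, F, P). KKT p \<gamma> lam S F P}
       = {(lam, S, F, P). 0 < lam \<and> Cc p (Slam p lam) = \<gamma>
            \<and> (\<forall>k<hor p. S k = Slam p lam k \<and> F k = Flam p lam k \<and> P k = Plam p lam k)}"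
proof -
  have g: "good p" using Qf tQf Q tQ R by (simp add: good_def)
  have Mk_ok: "transpose (Mk p S k) = Mk p S k \<and> invertible (Mk p S k)"
    if d: "dyn_ok p S F" and k: "k < hor p" for S F k
  proof -
    have "pd (Mk p S k)"
      by (rule Mk_pd[OF V W]) (use dyn_psd[OF V W d] k in auto)
    then show ?thesis by (simp add: pd_def pd_inv)
  qed
  show ?thesis
  proof (intro set_eqI iffI)
    fix x assume "x \<in> {(lam, S, F, P). KKT p \<gamma> lam S F P}"
    then obtain lam S F P where x: "x = (lam, S, F, P)" and kkt: "KKT p \<gamma> lam S F P" by auto
    have sP: "\<And>k. k < hor p \<Longrightarrow> symm (P k)" and d: "dyn_ok p S F" and CS: "Cc p S \<le> \<gamma>"
      and cs: "lam * (Cc p S - \<gamma>) = 0" and lam: "0 \<le> lam" and st: "stationary p \<gamma> S F P lam"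
      using kkt unfolding KKT_def by auto
    have stepL: "P k = Plam p lam k \<and> F k = Flam p lam k"
      if k: "k < hor p" and nxt: "Suc k < hor p \<Longrightarrow> P (Suc k) = Plam p lam (Suc k) \<and> F (Suc k) = Flam p lam (Suc k)" for k
    proof -
      have Weq: "Wk p lam F P k = Plam p lam k" by (rule Wk_eq[of p lam k P F, OF g lam k nxt])
      have X: "psd (Xlam p lam (Suc k))" using k by (intro Xlam_psd[OF g lam]) simp
      have sPl: "transpose (Plam p lam k) = Plam p lam k" by (rule Plam_props(3)[OF g lam k X])
      have stS: "((\<lambda>X. Lag p \<gamma> (S(k:=X)) F P lam) has_derivative (\<lambda>_. 0)) (at (S k) within {X. symm X})"
        and stF: "((\<lambda>G. Lag p \<gamma> S (F(k := G)) P lam) has_derivative (\<lambda>_. 0)) (at (F k))"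
        using st k unfolding stationary_def by auto
      have sS: "symm (S k)" using dyn_psd[OF V W d k] by (simp add: psd_def symm_def)
      have sh: "symm (Wk p lam F P k - P k)" using sP[OF k] sPl unfolding Weq symm_def by (simp add: tr_diff)
      have Pk: "P k = Plam p lam k" using statS_imp[OF stS k sS sh] Weq by simp
      have "transpose E2 ** P k ** stackI (F k) = 0"
        using statF_imp[OF stF k _ _ sP[OF k, unfolded symm_def]] Mk_ok[OF d k] by blast
      then have "F k = Flam p lam k" unfolding Pk by (rule F_from_zero[OF g lam k])
      with Pk show ?thesis by simp
    qed
    have PF: "P k = Plam p lam k \<and> F k = Flam p lam k" if k: "k < hor p" for k
    proof -
      have "k \<le> hor p - 1" using k by simp
      then show ?thesis
      proof (induction k rule: inc_induct)
        case base
        show ?case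
        proof (rule stepL)
          show "hor p - 1 < hor p" using N by simp
          show "Suc (hor p - 1) < hor p \<Longrightarrow> P (Suc (hor p - 1)) = Plam p lam (Suc (hor p - 1)) \<and> F (Suc (hor p - 1)) = Flam p lam (Suc (hor p - 1))"
            using N by simp
        qed
      next
        case (step n)
        show ?case
        proof (rule stepL)
          show "n < hor p" using step by simp
          show "P (Suc n) = Plam p lam (Suc n) \<and> F (Suc n) = Flam p lam (Suc n)" using step by blast
        qed
      qed
    qed
    have Sk: "\<forall>k<hor p. S k = Slam p lam k"
      using Slam_eq[OF d, of lam] PF by blast
    have CC: "Cc p S = Cc p (Slam p lam)" by (rule Cc_cong[OF N Sk])
    have "lam \<noteq> 0"
    proof
      assume "lam = 0"
      then have "Cc p (Slam p 0) \<le> \<gamma>" using CC CS by simp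
      then show False using nontriv by simp
    qed
    then have "0 < lam" "Cc p (Slam p lam) = \<gamma>" using lam cs CC by auto
    then show "x \<in> {(lam, S, F, P). 0 < lam \<and> Cc p (Slam p lam) = \<gamma>
            \<and> (\<forall>k<hor p. S k = Slam p lam k \<and> F k = Flam p lam k \<and> P k = Plam p lam k)}"
      using x Sk PF by auto
  next
    fix x assume "x \<in> {(lam, S, F, P). 0 < lam \<and> Cc p (Slam p lam) = \<gamma>
            \<and> (\<forall>k<hor p. S k = Slam p lam k \<and> F k = Flam p lam k \<and> P k = Plam p lam k)}"
    then obtain lam S F P where x: "x = (lam, S, F, P)" and lam: "0 < lam" and C: "Cc p (Slam p lam) = \<gamma>"
      and e: "\<forall>k<hor p. S k = Slam p lam k \<and> F k = Flam p lam k \<and> P k = Plam p lam k" by auto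
    have lam0: "0 \<le> lam" using lam by simp
    have X: "\<And>k. k < hor p \<Longrightarrow> psd (Xlam p lam (Suc k))" by (intro Xlam_psd[OF g lam0]) simp
    have sP: "\<forall>k<hor p. symm (P k)" using e Plam_props(3)[OF g lam0 _ X] by (simp add: symm_def)
    have d: "dyn_ok p S F"
      unfolding dyn_ok_def
    proof (intro conjI allI impI)
      show "S 0 = S0of p (F 0)" using e N by simp
      fix k assume k: "1 \<le> k \<and> k < hor p"
      then obtain j where j: "k = Suc j" by (cases k) auto
      then show "S k = Phi p (F k) (S (k - 1))" using e k by simp
    qed
    have CS: "Cc p S = \<gamma>" using Cc_cong[OF N, of S "Slam p lam"] e C by simp
    have st: "stationary p \<gamma> S F P lam"
      unfolding stationary_def
    proof (intro allI impI conjI)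
      fix k assume k: "k < hor p"
      have Weq: "Wk p lam F P k = Plam p lam k"
        by (rule Wk_eq[OF g lam0 k]) (use e in simp)
      show "((\<lambda>X. Lag p \<gamma> (S(k:=X)) F P lam) has_derivative (\<lambda>_. 0)) (at (S k) within {X. symm X})"
      proof (rule const_zero)
        fix Y show "Lag p \<gamma> (S(k:=Y)) F P lam = Lag p \<gamma> (S(k:=S k)) F P lam"
          unfolding Lag_S[OF k] Weq using e k by (simp add: trace_zero)
      qed
      have MM: "transpose (Mk p S k) = Mk p S k" using Mk_ok[OF d k] by blast
      have z: "transpose E2 ** P k ** stackI (F k) = 0" using Flam_zero[OF g lam0 k] e k by simp
      show "((\<lambda>G. Lag p \<gamma> S (F(k := G)) P lam) has_derivative (\<lambda>_. 0)) (at (F k))"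
      proof -
        have "transpose (P k) = P k" using sP k by (simp add: symm_def)
        from statF_suff[of k p S P F \<gamma> lam, OF k MM this z] show ?thesis .
      qed
    qed
    have "KKT p \<gamma> lam S F P"
      unfolding KKT_def using sP d CS lam st by simp
    then show "x \<in> {(lam, S, F, P). KKT p \<gamma> lam S F P}" using x by simp
  qed
qed

end
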